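(* Let $G$ be a group that is abelian or locally finite, $H$ a group, and $\phi,\psi\in\mathrm{Hom}(H,G)$. Then $\phi^*\circ\tau\neq\psi^*\circ\tau$ for every non-constant $\tau\in\mathrm{CA}(A^G)$ if and only if $\Delta(\phi,\psi)$ is infinite.
   Context: $A$ is a finite set with $|A|\ge 2$. $A^G$ is the set of functions $G\to A$ with shift action $(g\cdot x)(k):=x(g^{-1}k)$. $\mathrm{CA}(A^G)$ is the set of maps $\tau:A^G\to A^G$ for which there exist finite $T\subseteq G$ and $\mu:A^T\to A$ with $\tau(x)(g)=\mu((g^{-1}\cdot x)|_T)$ for all $x,g$. $\phi^*:A^G\to A^H$, $\phi^*(x):=x\circ\phi$. $\Delta(\phi,\psi):=\{\psi(h)^{-1}\phi(h):h\in H\}$. A group is locally finite if every finitely generated subgroup is finite. *)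

theory Defs
  imports "HOL-Algebra.Algebra" "HOL-Library.FuncSet"
begin

definition configs :: "('g, 'm) monoid_scheme \<Rightarrow> 'a set \<Rightarrow> ('g \<Rightarrow> 'a) set" where
  "configs G A = (carrier G \<rightarrow>\<^sub>E A)"

definition shift :: "('g, 'm) monoid_scheme \<Rightarrow> 'g \<Rightarrow> ('g \<Rightarrow> 'a) \<Rightarrow> ('g \<Rightarrow> 'a)" where
  "shift G g x = (\<lambda>k\<in>carrier G. x (inv\<^bsub>G\<^esub> g \<otimes>\<^bsub>G\<^esub> k))"

definition is_CA :: "('g, 'm) monoid_scheme \<Rightarrow> 'a set \<Rightarrow> (('g \<Rightarrow> 'a) \<Rightarrow> ('g \<Rightarrow> 'a)) \<Rightarrow> bool" where
  "is_CA G A \<tau> \<longleftrightarrow> \<tau> \<in> configs G A \<rightarrow> configs G A \<and>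
     (\<exists>T \<mu>. finite T \<and> T \<subseteq> carrier G \<and> \<mu> \<in> (T \<rightarrow>\<^sub>E A) \<rightarrow> A \<and>
       (\<forall>x\<in>configs G A. \<forall>g\<in>carrier G.
          \<tau> x g = \<mu> (restrict (shift G (inv\<^bsub>G\<^esub> g) x) T)))"

definition pullback :: "('h, 'n) monoid_scheme \<Rightarrow> ('h \<Rightarrow> 'g) \<Rightarrow> ('g \<Rightarrow> 'a) \<Rightarrow> ('h \<Rightarrow> 'a)" where
  "pullback H \<phi> x = (\<lambda>h\<in>carrier H. x (\<phi> h))"

definition Delta :: "('g, 'm) monoid_scheme \<Rightarrow> ('h, 'n) monoid_scheme \<Rightarrow> ('h \<Rightarrow> 'g) \<Rightarrow> ('h \<Rightarrow> 'g) \<Rightarrow> 'g set" where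
  "Delta G H \<phi> \<psi> = {inv\<^bsub>G\<^esub> (\<psi> h) \<otimes>\<^bsub>G\<^esub> \<phi> h | h. h \<in> carrier H}"

definition locally_finite_group :: "('g, 'm) monoid_scheme \<Rightarrow> bool" where
  "locally_finite_group G \<longleftrightarrow> (\<forall>S. S \<subseteq> carrier G \<and> finite S \<longrightarrow> finite (generate G S))"

end

theory Submission
  imports Defs
begin

lemma shift_eval:
  assumes "group G" "g \<in> carrier G" "k \<in> carrier G"
  shows "shift G (inv\<^bsub>G\<^esub> g) x k = x (g \<otimes>\<^bsub>G\<^esub> k)"
  using assms by (simp add: shift_def group.inv_inv)

lemma (in comm_group) swap4: "a \<in> carrier G \<Longrightarrow> b \<in> carrier G \<Longrightarrow> c \<in> carrier G \<Longrightarrow> d \<in> carrier G \<Longrightarrow>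
  inv (a \<otimes> b) \<otimes> (c \<otimes> d) = (inv a \<otimes> c) \<otimes> (inv b \<otimes> d)"
  by (simp add: inv_mult m_assoc m_lcomm)

lemma abelian_sub:
  assumes "comm_group G" "group H" "\<phi> \<in> hom H G" "\<psi> \<in> hom H G"
  shows "subgroup (Delta G H \<phi> \<psi>) G"
proof -
  interpret G: comm_group G by fact
  interpret H: group H by fact
  define f where "f = (\<lambda>h. inv\<^bsub>G\<^esub> (\<psi> h) \<otimes>\<^bsub>G\<^esub> \<phi> h)"
  have cl: "\<And>h. h \<in> carrier H \<Longrightarrow> \<phi> h \<in> carrier G \<and> \<psi> h \<in> carrier G"
    using assms(3,4) by (auto simp: hom_def)
  have "f \<in> hom H G"
  proof (rule homI)
    fix x assume "x \<in> carrier H" then show "f x \<in> carrier G" using cl by (simp add: f_def)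
  next
    fix x y assume xy: "x \<in> carrier H" "y \<in> carrier H"
    then have "\<phi> (x \<otimes>\<^bsub>H\<^esub> y) = \<phi> x \<otimes>\<^bsub>G\<^esub> \<phi> y" "\<psi> (x \<otimes>\<^bsub>H\<^esub> y) = \<psi> x \<otimes>\<^bsub>G\<^esub> \<psi> y"
      using assms(3,4) xy by (simp_all add: hom_mult)
    then show "f (x \<otimes>\<^bsub>H\<^esub> y) = f x \<otimes>\<^bsub>G\<^esub> f y"
      using cl[OF xy(1)] cl[OF xy(2)] unfolding f_def by (simp only: G.swap4)
  qed
  then interpret group_hom H G f unfolding group_hom_def group_hom_axioms_def using assms(1,2) comm_group.axioms(2) by blast
  have "Delta G H \<phi> \<psi> = f ` carrier H" by (auto simp: Delta_def f_def)
  then show ?thesis using img_is_subgroup by simp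
qed

lemma finite_case:
  assumes G: "group G" and H: "group H" and hom: "\<phi> \<in> hom H G" "\<psi> \<in> hom H G"
    and K: "subgroup K G" "finite K" "Delta G H \<phi> \<psi> \<subseteq> K"
    and ab: "a \<in> A" "b \<in> A" "a \<noteq> b"
  shows "\<exists>\<tau>. is_CA G A \<tau> \<and> (\<exists>x\<in>configs G A. \<exists>y\<in>configs G A. \<tau> x \<noteq> \<tau> y) \<and>
          \<not> (\<exists>x\<in>configs G A. pullback H \<phi> (\<tau> x) \<noteq> pullback H \<psi> (\<tau> x))"
proof -
  interpret G: group G by fact
  interpret K: subgroup K G by fact
  define \<mu> where "\<mu> = (\<lambda>p. if (\<forall>k\<in>K. p k = a) then a else b)"
  define \<tau> where "\<tau> = (\<lambda>x. \<lambda>g\<in>carrier G. \<mu> (restrict (shift G (inv\<^bsub>G\<^esub> g) x) K))"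
  have tau_eq: "\<And>x g. g \<in> carrier G \<Longrightarrow> \<tau> x g = (if (\<forall>k\<in>K. x (g \<otimes>\<^bsub>G\<^esub> k) = a) then a else b)"
    by (simp add: \<tau>_def \<mu>_def shift_eval[OF G] K.subset[THEN subsetD])
  have CA: "is_CA G A \<tau>"
    unfolding is_CA_def
  proof (intro conjI exI[of _ K] exI[of _ \<mu>])
    show "\<tau> \<in> configs G A \<rightarrow> configs G A"
      using ab by (auto simp: configs_def \<tau>_def \<mu>_def)
    show "\<mu> \<in> (K \<rightarrow>\<^sub>E A) \<rightarrow> A" using ab by (auto simp: \<mu>_def)
  qed (auto simp: K \<tau>_def K.subset)
  define x where "x = (\<lambda>g\<in>carrier G. a)"
  define y where "y = (\<lambda>g\<in>carrier G. b)"
  have xc: "x \<in> configs G A" "y \<in> configs G A" using ab by (auto simp: configs_def x_def y_def)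
  have ne: "\<tau> x \<noteq> \<tau> y"
  proof -
    have "\<tau> x \<one>\<^bsub>G\<^esub> = a" by (simp add: tau_eq x_def K.subset[THEN subsetD])
    moreover have "\<not> (\<forall>k\<in>K. y (\<one>\<^bsub>G\<^esub> \<otimes>\<^bsub>G\<^esub> k) = a)"
    proof
      assume "\<forall>k\<in>K. y (\<one>\<^bsub>G\<^esub> \<otimes>\<^bsub>G\<^esub> k) = a"
      then have "y (\<one>\<^bsub>G\<^esub> \<otimes>\<^bsub>G\<^esub> \<one>\<^bsub>G\<^esub>) = a" using K.one_closed by blast
      then show False using ab by (simp add: y_def)
    qed
    then have "\<tau> y \<one>\<^bsub>G\<^esub> = b" using tau_eq[of "\<one>\<^bsub>G\<^esub>" y] by auto
    ultimately show ?thesis using ab by metis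
  qed
  have pb: "pullback H \<phi> (\<tau> z) = pullback H \<psi> (\<tau> z)" for z
  proof -
    have "\<tau> z (\<phi> h) = \<tau> z (\<psi> h)" if h: "h \<in> carrier H" for h
    proof -
      have p: "\<phi> h \<in> carrier G" and q: "\<psi> h \<in> carrier G" using hom h by (auto simp: hom_def)
      define d where "d = inv\<^bsub>G\<^esub> (\<psi> h) \<otimes>\<^bsub>G\<^esub> \<phi> h"
      have dK: "d \<in> K" using K(3) h by (auto simp: Delta_def d_def)
      have pd: "\<phi> h = \<psi> h \<otimes>\<^bsub>G\<^esub> d" using p q by (simp add: d_def G.m_assoc[symmetric])
      have "(\<forall>k\<in>K. z (\<phi> h \<otimes>\<^bsub>G\<^esub> k) = a) \<longleftrightarrow> (\<forall>k\<in>K. z (\<psi> h \<otimes>\<^bsub>G\<^esub> k) = a)"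
      proof
        assume A1: "\<forall>k\<in>K. z (\<phi> h \<otimes>\<^bsub>G\<^esub> k) = a"
        show "\<forall>k\<in>K. z (\<psi> h \<otimes>\<^bsub>G\<^esub> k) = a"
        proof
          fix k assume k: "k \<in> K"
          have "inv\<^bsub>G\<^esub> d \<otimes>\<^bsub>G\<^esub> k \<in> K" using dK k by simp
          moreover have "\<phi> h \<otimes>\<^bsub>G\<^esub> (inv\<^bsub>G\<^esub> d \<otimes>\<^bsub>G\<^esub> k) = \<psi> h \<otimes>\<^bsub>G\<^esub> k"
            using pd dK k q K.subset by (simp add: G.m_assoc[symmetric] subsetD)
              (simp add: G.m_assoc subsetD)
          ultimately show "z (\<psi> h \<otimes>\<^bsub>G\<^esub> k) = a" using A1 by metis
        qed
      next
        assume A1: "\<forall>k\<in>K. z (\<psi> h \<otimes>\<^bsub>G\<^esub> k) = a"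
        show "\<forall>k\<in>K. z (\<phi> h \<otimes>\<^bsub>G\<^esub> k) = a"
        proof
          fix k assume k: "k \<in> K"
          have "d \<otimes>\<^bsub>G\<^esub> k \<in> K" using dK k by simp
          moreover have "\<psi> h \<otimes>\<^bsub>G\<^esub> (d \<otimes>\<^bsub>G\<^esub> k) = \<phi> h \<otimes>\<^bsub>G\<^esub> k"
            using pd dK k q K.subset by (simp add: G.m_assoc subsetD)
          ultimately show "z (\<phi> h \<otimes>\<^bsub>G\<^esub> k) = a" using A1 by metis
        qed
      qed
      then show ?thesis using p q by (simp add: tau_eq)
    qed
    then show ?thesis by (auto simp: pullback_def intro!: restrict_ext)
  qed
  have "\<exists>x\<in>configs G A. \<exists>y\<in>configs G A. \<tau> x \<noteq> \<tau> y" using xc ne by blast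
  moreover have "\<not> (\<exists>x\<in>configs G A. pullback H \<phi> (\<tau> x) \<noteq> pullback H \<psi> (\<tau> x))"
    using pb by simp
  ultimately show ?thesis using CA by (intro exI[of _ \<tau>] conjI)
qed


lemma infinite_case:
  assumes G: "group G" and H: "group H" and hom: "\<phi> \<in> hom H G" "\<psi> \<in> hom H G"
    and inf: "infinite (Delta G H \<phi> \<psi>)" and CA: "is_CA G A \<tau>"
    and xy: "x0 \<in> configs G A" "y0 \<in> configs G A" "\<tau> x0 \<noteq> \<tau> y0" and a: "a \<in> A"
  shows "\<exists>x\<in>configs G A. pullback H \<phi> (\<tau> x) \<noteq> pullback H \<psi> (\<tau> x)"
proof (rule ccontr)
  interpret G: group G by fact
  assume "\<not> ?thesis"
  then have eq: "\<And>x. x \<in> configs G A \<Longrightarrow> pullback H \<phi> (\<tau> x) = pullback H \<psi> (\<tau> x)" by blast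
  from CA obtain T \<mu> where T: "finite T" "T \<subseteq> carrier G" "\<mu> \<in> (T \<rightarrow>\<^sub>E A) \<rightarrow> A"
    and tau: "\<And>x g. x \<in> configs G A \<Longrightarrow> g \<in> carrier G \<Longrightarrow> \<tau> x g = \<mu> (restrict (shift G (inv\<^bsub>G\<^esub> g) x) T)"
    and tauc: "\<tau> \<in> configs G A \<rightarrow> configs G A"
    unfolding is_CA_def by blast
  define F where "F = (\<lambda>(t, s). t \<otimes>\<^bsub>G\<^esub> inv\<^bsub>G\<^esub> s) ` (T \<times> T)"
  have "finite F" using T(1) by (simp add: F_def)
  then have inf2: "infinite (Delta G H \<phi> \<psi> - F)" using inf by (meson Diff_infinite_finite)
  obtain d where d: "d \<in> Delta G H \<phi> \<psi>" "d \<notin> F" using infinite_imp_nonempty[OF inf2] by blast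
  then obtain h where h: "h \<in> carrier H" and dh: "d = inv\<^bsub>G\<^esub> (\<psi> h) \<otimes>\<^bsub>G\<^esub> \<phi> h"
    by (auto simp: Delta_def)
  define u where "u = \<phi> h"
  define v where "v = \<psi> h"
  have u: "u \<in> carrier G" and v: "v \<in> carrier G" using hom h by (auto simp: hom_def u_def v_def)
  have const: "\<mu> p = \<mu> q" if p: "p \<in> T \<rightarrow>\<^sub>E A" and q: "q \<in> T \<rightarrow>\<^sub>E A" for p q
  proof -
    define x where "x = (\<lambda>g\<in>carrier G. if inv\<^bsub>G\<^esub> u \<otimes>\<^bsub>G\<^esub> g \<in> T then p (inv\<^bsub>G\<^esub> u \<otimes>\<^bsub>G\<^esub> g)
        else if inv\<^bsub>G\<^esub> v \<otimes>\<^bsub>G\<^esub> g \<in> T then q (inv\<^bsub>G\<^esub> v \<otimes>\<^bsub>G\<^esub> g) else a)"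
    have xc: "x \<in> configs G A" using p q a by (auto simp: configs_def x_def)
    have "restrict (shift G (inv\<^bsub>G\<^esub> u) x) T = p"
    proof
      fix k show "restrict (shift G (inv\<^bsub>G\<^esub> u) x) T k = p k"
      proof (cases "k \<in> T")
        case True
        then have k: "k \<in> carrier G" using T(2) by auto
        have e: "inv\<^bsub>G\<^esub> u \<otimes>\<^bsub>G\<^esub> (u \<otimes>\<^bsub>G\<^esub> k) = k" using k u by (simp add: G.m_assoc[symmetric])
        have "u \<otimes>\<^bsub>G\<^esub> k \<in> carrier G" using k u by simp
        then show ?thesis using True k u e by (simp add: shift_eval[OF G] x_def)
      next
        case False then show ?thesis using PiE_arb[OF p False] by simp
      qed
    qed
    then have tu: "\<tau> x u = \<mu> p" using tau[OF xc u] by simp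
    have "restrict (shift G (inv\<^bsub>G\<^esub> v) x) T = q"
    proof
      fix k show "restrict (shift G (inv\<^bsub>G\<^esub> v) x) T k = q k"
      proof (cases "k \<in> T")
        case True
        then have k: "k \<in> carrier G" using T(2) by auto
        have nT: "inv\<^bsub>G\<^esub> u \<otimes>\<^bsub>G\<^esub> (v \<otimes>\<^bsub>G\<^esub> k) \<notin> T"
        proof
          assume t: "inv\<^bsub>G\<^esub> u \<otimes>\<^bsub>G\<^esub> (v \<otimes>\<^bsub>G\<^esub> k) \<in> T"
          have "k \<otimes>\<^bsub>G\<^esub> inv\<^bsub>G\<^esub> (inv\<^bsub>G\<^esub> u \<otimes>\<^bsub>G\<^esub> (v \<otimes>\<^bsub>G\<^esub> k)) = d"
            using u v k by (simp add: dh u_def[symmetric] v_def[symmetric] G.inv_mult_group G.m_assoc[symmetric])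
          then have "d \<in> F" using t True unfolding F_def by force
          then show False using d by blast
        qed
        have e: "inv\<^bsub>G\<^esub> v \<otimes>\<^bsub>G\<^esub> (v \<otimes>\<^bsub>G\<^esub> k) = k" using k v by (simp add: G.m_assoc[symmetric])
        have "v \<otimes>\<^bsub>G\<^esub> k \<in> carrier G" using k v by simp
        then show ?thesis using True k v e nT by (simp add: shift_eval[OF G] x_def)
      next
        case False then show ?thesis using PiE_arb[OF q False] by simp
      qed
    qed
    then have tv: "\<tau> x v = \<mu> q" using tau[OF xc v] by simp
    have "pullback H \<phi> (\<tau> x) h = pullback H \<psi> (\<tau> x) h" using eq[OF xc] by simp
    then have "\<tau> x u = \<tau> x v" using h by (simp add: pullback_def u_def v_def)
    then show ?thesis using tu tv by simp
  qed
  have "\<tau> x0 = \<tau> y0"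
  proof
    fix g show "\<tau> x0 g = \<tau> y0 g"
    proof (cases "g \<in> carrier G")
      case True
      have "restrict (shift G (inv\<^bsub>G\<^esub> g) z) T \<in> T \<rightarrow>\<^sub>E A" if z: "z \<in> configs G A" for z
      proof -
        have "shift G (inv\<^bsub>G\<^esub> g) z k \<in> A" if "k \<in> T" for k
        proof -
          have k: "k \<in> carrier G" using that T(2) by auto
          then have "g \<otimes>\<^bsub>G\<^esub> k \<in> carrier G" using True by simp
          then show ?thesis using z k True by (auto simp: shift_eval[OF G] configs_def)
        qed
        then show ?thesis by auto
      qed
      then show ?thesis using tau[OF xy(1) True] tau[OF xy(2) True] const xy by metis
    next
      case False
      have c: "\<tau> x0 \<in> carrier G \<rightarrow>\<^sub>E A" "\<tau> y0 \<in> carrier G \<rightarrow>\<^sub>E A"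
        using tauc xy unfolding configs_def by auto
      show ?thesis using PiE_arb[OF c(1) False] PiE_arb[OF c(2) False] by simp
    qed
  qed
  then show False using xy(3) by simp
qed


theorem proposition3p14:
  fixes G :: "('g, 'm) monoid_scheme" and H :: "('h, 'n) monoid_scheme"
    and A :: "'a set" and \<phi> \<psi> :: "'h \<Rightarrow> 'g"
  assumes "group G" and "group H"
    and "comm_group G \<or> locally_finite_group G"
    and "\<phi> \<in> hom H G" and "\<psi> \<in> hom H G"
    and "finite A" and "card A \<ge> 2"
  shows "(\<forall>\<tau>. is_CA G A \<tau> \<and> (\<exists>x\<in>configs G A. \<exists>y\<in>configs G A. \<tau> x \<noteq> \<tau> y) \<longrightarrow>
            (\<exists>x\<in>configs G A. pullback H \<phi> (\<tau> x) \<noteq> pullback H \<psi> (\<tau> x)))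
         \<longleftrightarrow> infinite (Delta G H \<phi> \<psi>)"
proof -
  have "A \<noteq> {}" using assms(7) by auto
  then obtain a where a: "a \<in> A" by blast
  have "card (A - {a}) \<ge> 1" using assms(6,7) a by (simp add: card_Diff_singleton)
  then have "A - {a} \<noteq> {}" by (metis card.empty not_one_le_zero)
  then obtain b where b: "b \<in> A" "b \<noteq> a" by blast
  show ?thesis
  proof
    assume L: "\<forall>\<tau>. is_CA G A \<tau> \<and> (\<exists>x\<in>configs G A. \<exists>y\<in>configs G A. \<tau> x \<noteq> \<tau> y) \<longrightarrow>
            (\<exists>x\<in>configs G A. pullback H \<phi> (\<tau> x) \<noteq> pullback H \<psi> (\<tau> x))"
    show "infinite (Delta G H \<phi> \<psi>)"
    proof
      assume fin: "finite (Delta G H \<phi> \<psi>)"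
      have sub: "Delta G H \<phi> \<psi> \<subseteq> carrier G"
        using assms(1,4,5) by (auto simp: Delta_def hom_def group.subgroup_self
              intro!: monoid.m_closed group.is_monoid group.inv_closed)
      obtain K where K: "subgroup K G" "finite K" "Delta G H \<phi> \<psi> \<subseteq> K"
      proof (cases "comm_group G")
        case True
        show ?thesis using abelian_sub[OF True assms(2,4,5)] fin by (intro that) auto
      next
        case False
        then have lf: "locally_finite_group G" using assms(3) by blast
        have f1: "finite (generate G (Delta G H \<phi> \<psi>))" using lf[unfolded locally_finite_group_def] sub fin
          by blast
        have f2: "subgroup (generate G (Delta G H \<phi> \<psi>)) G"
          using group.generate_is_subgroup[OF assms(1) sub] .
        have f3: "Delta G H \<phi> \<psi> \<subseteq> generate G (Delta G H \<phi> \<psi>)"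
          by (rule subsetI) (rule generate.incl)
        show ?thesis by (rule that[OF f2 f1 f3])
      qed
      from finite_case[OF assms(1,2,4,5) K a b(1) b(2)[symmetric]]
      obtain \<tau> where "is_CA G A \<tau>" "\<exists>x\<in>configs G A. \<exists>y\<in>configs G A. \<tau> x \<noteq> \<tau> y"
          "\<not> (\<exists>x\<in>configs G A. pullback H \<phi> (\<tau> x) \<noteq> pullback H \<psi> (\<tau> x))" by (elim exE conjE)
      then show False using L[rule_format, of \<tau>] by blast
    qed
  next
    assume inf: "infinite (Delta G H \<phi> \<psi>)"
    show "\<forall>\<tau>. is_CA G A \<tau> \<and> (\<exists>x\<in>configs G A. \<exists>y\<in>configs G A. \<tau> x \<noteq> \<tau> y) \<longrightarrow>
            (\<exists>x\<in>configs G A. pullback H \<phi> (\<tau> x) \<noteq> pullback H \<psi> (\<tau> x))"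
    proof (intro allI impI)
      fix \<tau> assume "is_CA G A \<tau> \<and> (\<exists>x\<in>configs G A. \<exists>y\<in>configs G A. \<tau> x \<noteq> \<tau> y)"
      then obtain x y where h: "is_CA G A \<tau>" "x \<in> configs G A" "y \<in> configs G A" "\<tau> x \<noteq> \<tau> y" by blast
      show "\<exists>x\<in>configs G A. pullback H \<phi> (\<tau> x) \<noteq> pullback H \<psi> (\<tau> x)"
        by (rule infinite_case[OF assms(1,2,4,5) inf h a])
    qed
  qed
qed

end
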